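(* Fix integers $k,r\ge 1$ and $n\ge 0$. Let $R_{k,r}(n)=\frac{r}{kn+r}\binom{kn+r}{n}$. Then $R_{k,r}(n)$ equals the number of ordered $r$-tuples $(T_1,\dots,T_r)$ for which there is a sequence of nonnegative integers $(i_1,\dots,i_r)$ with $i_1+\dots+i_r=n$ such that $T_j\in\mathrm{SVT}(i_j^2,\rho^{(i_j)})$ for each $j$, where $\rho^{(i)}$ is the density on the two-row shape $i^2=(i,i)$ with $\rho_{1,c}=1$ and $\rho_{2,c}=k-1$ for all columns $c$ (for $i_j=0$, $T_j$ is the unique empty tableau).
   Context: For $i\ge 0$, $i^2$ denotes the two-row rectangular shape $(i,i)$. A density on a shape $\lambda$ is an assignment of a nonnegative integer $\rho_{i,j}$ to every cell $(i,j)$ (row $i$, column $j$); let $N=\sum\rho_{i,j}$. A standard set-valued Young tableau of shape $\lambda$ and density $\rho$ assigns to each cell $(i,j)$ a set $S_{i,j}$ with $|S_{i,j}|=\rho_{i,j}$, the sets partitioning $[N]$, such that every element of $S_{i,j}$ is smaller than every element of $S_{i,j+1}$ and of $S_{i+1,j}$ whenever those cells exist (conditions involving an empty set are vacuous). $\mathrm{SVT}(\lambda,\rho)$ is the set of these tableaux. *)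

theory Defs
  imports Complex_Main
begin

text \<open>A shape (partition) is given by its list of row lengths; cells are (row, column),
  1-indexed.\<close>
definition cells :: "nat list \<Rightarrow> (nat \<times> nat) set" where
  "cells lam = {(i, j). 1 \<le> i \<and> i \<le> length lam \<and> 1 \<le> j \<and> j \<le> lam ! (i - 1)}"

definition rect2 :: "nat \<Rightarrow> nat list" where
  "rect2 i = [i, i]"

definition total_density :: "nat list \<Rightarrow> (nat \<times> nat \<Rightarrow> nat) \<Rightarrow> nat" where
  "total_density lam rho = (\<Sum>c\<in>cells lam. rho c)"

text \<open>Standard set-valued Young tableaux of shape lam and density rho.  A tableau is a
  function assigning a set to every cell; it is normalised to be empty outside the shape.\<close>
definition SVT :: "nat list \<Rightarrow> (nat \<times> nat \<Rightarrow> nat) \<Rightarrow> (nat \<times> nat \<Rightarrow> nat set) set" where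
  "SVT lam rho = {T.
     (\<forall>c. c \<notin> cells lam \<longrightarrow> T c = {}) \<and>
     (\<forall>c\<in>cells lam. finite (T c) \<and> card (T c) = rho c) \<and>
     (\<forall>c\<in>cells lam. \<forall>d\<in>cells lam. c \<noteq> d \<longrightarrow> T c \<inter> T d = {}) \<and>
     (\<Union>c\<in>cells lam. T c) = {1..total_density lam rho} \<and>
     (\<forall>i j. (i, j) \<in> cells lam \<and> (i, Suc j) \<in> cells lam \<longrightarrow>
            (\<forall>x\<in>T (i, j). \<forall>y\<in>T (i, Suc j). x < y)) \<and>
     (\<forall>i j. (i, j) \<in> cells lam \<and> (Suc i, j) \<in> cells lam \<longrightarrow>
            (\<forall>x\<in>T (i, j). \<forall>y\<in>T (Suc i, j). x < y))}"

definition rho_k :: "nat \<Rightarrow> nat \<times> nat \<Rightarrow> nat" where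
  "rho_k k c = (if fst c = 1 then 1 else k - 1)"

end

theory Submission
  imports Defs
begin

fun bal :: "nat \<Rightarrow> nat \<Rightarrow> bool list \<Rightarrow> bool" where
  "bal k h [] = (h = 0)"
| "bal k h (True # w) = bal k (h + (k - 1)) w"
| "bal k 0 (False # w) = False"
| "bal k (Suc h) (False # w) = bal k h w"

definition cnt :: "bool list \<Rightarrow> nat" where "cnt w = length (filter id w)"

lemma bal_len: "k \<ge> 1 \<Longrightarrow> bal k h w \<Longrightarrow> length w = h + k * cnt w"
proof (induction w arbitrary: h)
  case Nil then show ?case by (simp add: cnt_def)
next
  case (Cons x w)
  show ?case
  proof (cases x)
    case True then show ?thesis using Cons by (auto simp: cnt_def)
  next
    case False then show ?thesis using Cons by (cases h) (auto simp: cnt_def)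
  qed
qed

lemma bal_decomp: "bal k (a + Suc h) w \<longleftrightarrow> (\<exists>u v. w = u @ False # v \<and> bal k a u \<and> bal k h v)"
proof (induction w arbitrary: a)
  case Nil then show ?case by simp
next
  case (Cons x w)
  show ?case
  proof (cases x)
    case True
    have "bal k (a + Suc h) (x # w) = bal k ((a + (k - 1)) + Suc h) w" using True by (simp add: algebra_simps)
    also have "\<dots> = (\<exists>u v. w = u @ False # v \<and> bal k (a + (k-1)) u \<and> bal k h v)" using Cons.IH .
    also have "\<dots> = (\<exists>u v. x # w = u @ False # v \<and> bal k a u \<and> bal k h v)"
    proof
      assume "\<exists>u v. w = u @ False # v \<and> bal k (a + (k-1)) u \<and> bal k h v"
      then obtain u v where "w = u @ False # v" "bal k (a + (k-1)) u" "bal k h v" by blast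
      then show "\<exists>u v. x # w = u @ False # v \<and> bal k a u \<and> bal k h v"
        using True by (intro exI[of _ "True # u"] exI[of _ v]) auto
    next
      assume "\<exists>u v. x # w = u @ False # v \<and> bal k a u \<and> bal k h v"
      then obtain u v where uv: "x # w = u @ False # v" "bal k a u" "bal k h v" by blast
      then obtain u' where "u = True # u'" using True by (cases u) auto
      then show "\<exists>u v. w = u @ False # v \<and> bal k (a + (k-1)) u \<and> bal k h v"
        using uv by auto
    qed
    finally show ?thesis .
  next
    case False
    show ?thesis
    proof (cases a)
      case 0
      have "bal k (a + Suc h) (x # w) = bal k h w" using 0 False by simp
      also have "\<dots> = (\<exists>u v. x # w = u @ False # v \<and> bal k a u \<and> bal k h v)"
      proof
        assume "bal k h w" then show "\<exists>u v. x # w = u @ False # v \<and> bal k a u \<and> bal k h v"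
          using 0 False by (intro exI[of _ "[]"] exI[of _ w]) auto
      next
        assume "\<exists>u v. x # w = u @ False # v \<and> bal k a u \<and> bal k h v"
        then obtain u v where uv: "x # w = u @ False # v" "bal k a u" "bal k h v" by blast
        then show "bal k h w" using 0 False by (cases u) auto
      qed
      finally show ?thesis .
    next
      case (Suc a')
      have "bal k (a + Suc h) (x # w) = bal k (a' + Suc h) w" using Suc False by simp
      also have "\<dots> = (\<exists>u v. w = u @ False # v \<and> bal k a' u \<and> bal k h v)" using Cons.IH .
      also have "\<dots> = (\<exists>u v. x # w = u @ False # v \<and> bal k a u \<and> bal k h v)"
      proof
        assume "\<exists>u v. w = u @ False # v \<and> bal k a' u \<and> bal k h v"
        then obtain u v where "w = u @ False # v" "bal k a' u" "bal k h v" by blast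
        then show "\<exists>u v. x # w = u @ False # v \<and> bal k a u \<and> bal k h v"
          using False Suc by (intro exI[of _ "False # u"] exI[of _ v]) auto
      next
        assume "\<exists>u v. x # w = u @ False # v \<and> bal k a u \<and> bal k h v"
        then obtain u v where uv: "x # w = u @ False # v" "bal k a u" "bal k h v" by blast
        then obtain u' where "u = False # u'" using False Suc by (cases u) auto
        then show "\<exists>u v. w = u @ False # v \<and> bal k a' u \<and> bal k h v"
          using uv Suc by auto
      qed
      finally show ?thesis .
    qed
  qed
qed

lemma bal_uniq: "bal k a u \<Longrightarrow> bal k a u' \<Longrightarrow> u @ False # v = u' @ False # v' \<Longrightarrow> u = u' \<and> v = v'"
proof (induction u arbitrary: a u')
  case Nil
  then show ?case by (cases u') (auto split: if_splits elim: bal.elims)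
next
  case (Cons x u)
  show ?case
  proof (cases u')
    case Nil
    then show ?thesis using Cons.prems by (cases x; cases a) auto
  next
    case (Cons y u'')
    show ?thesis
    proof (cases x)
      case True
      then have "y = True" using Cons Cons.prems by auto
      then show ?thesis using Cons.IH[of "a + (k-1)" u''] Cons.prems Cons True by auto
    next
      case False
      then have y: "y = False" using Cons Cons.prems by auto
      obtain a' where a: "a = Suc a'" using Cons.prems False by (cases a) auto
      show ?thesis using Cons.IH[of a' u''] Cons.prems Cons False y a by auto
    qed
  qed
qed


definition bw :: "nat \<Rightarrow> nat \<Rightarrow> nat \<Rightarrow> bool list set" where
  "bw k h n = {w. bal k h w \<and> cnt w = n}"

lemma bw_finite: "k \<ge> 1 \<Longrightarrow> finite (bw k h n)"
proof -
  assume k: "k \<ge> 1"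
  have "bw k h n \<subseteq> {w. set w \<subseteq> UNIV \<and> length w = h + k * n}"
    using bal_len[OF k] by (auto simp: bw_def)
  moreover have "finite {w::bool list. set w \<subseteq> UNIV \<and> length w = h + k * n}"
    by (rule finite_lists_length_eq) simp
  ultimately show ?thesis by (rule finite_subset)
qed

lemma bal_cnt0: "bal k h w \<and> cnt w = 0 \<longleftrightarrow> w = replicate h False"
proof (induction w arbitrary: h)
  case Nil then show ?case by (auto simp: cnt_def)
next
  case (Cons x w)
  show ?case
  proof (cases x)
    case True then show ?thesis by (cases h) (auto simp: cnt_def)
  next
    case False then show ?thesis using Cons
      by (cases h) (auto simp: cnt_def)
  qed
qed

lemma bw_0: "bw k h 0 = {replicate h False}"
  unfolding bw_def by (simp only: bal_cnt0) auto

lemma bw_Suc0: "bw k 0 (Suc n) = Cons True ` bw k (k - 1) n"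
proof (rule set_eqI)
  fix w show "w \<in> bw k 0 (Suc n) \<longleftrightarrow> w \<in> Cons True ` bw k (k - 1) n"
  proof (cases w)
    case (Cons x w') then show ?thesis by (cases x) (auto simp: bw_def cnt_def)
  next
    case Nil then show ?thesis by (simp add: bw_def cnt_def image_iff)
  qed
qed

lemma bw_SucSuc: assumes k: "k \<ge> 1" shows "bw k (Suc h) (Suc n) = Cons False ` bw k h (Suc n) \<union> Cons True ` bw k (h + k) n"
proof (rule set_eqI)
  fix w show "w \<in> bw k (Suc h) (Suc n) \<longleftrightarrow> w \<in> Cons False ` bw k h (Suc n) \<union> Cons True ` bw k (h + k) n"
  proof (cases w)
    case Nil then show ?thesis by (simp add: bw_def cnt_def image_iff)
  next
    case (Cons x w')
    have e: "Suc h + (k - 1) = h + k" using k by simp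
    show ?thesis using Cons e by (cases x) (auto simp: bw_def cnt_def)
  qed
qed

lemma bw_conv_set: "bw k (Suc h) n = (\<Union>m\<in>{..n}. (\<lambda>(u,v). u @ False # v) ` (bw k 0 m \<times> bw k h (n - m)))"
proof (rule set_eqI)
  fix w
  show "w \<in> bw k (Suc h) n \<longleftrightarrow> w \<in> (\<Union>m\<in>{..n}. (\<lambda>(u,v). u @ False # v) ` (bw k 0 m \<times> bw k h (n - m)))"
  proof
    assume "w \<in> bw k (Suc h) n"
    then have "bal k (0 + Suc h) w" "cnt w = n" by (auto simp: bw_def)
    then obtain u v where uv: "w = u @ False # v" "bal k 0 u" "bal k h v" "cnt w = n"
      using bal_decomp[of k 0 h w] by blast
    then have "cnt w = cnt u + cnt v" by (simp add: cnt_def)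
    then have mem: "(u, v) \<in> bw k 0 (cnt u) \<times> bw k h (n - cnt u)" and le: "cnt u \<in> {..n}"
      using uv by (auto simp: bw_def)
    have "w \<in> (\<lambda>(u,v). u @ False # v) ` (bw k 0 (cnt u) \<times> bw k h (n - cnt u))"
      by (rule image_eqI[where x="(u,v)"], simp add: uv(1), rule mem)
    then show "w \<in> (\<Union>m\<in>{..n}. (\<lambda>(u,v). u @ False # v) ` (bw k 0 m \<times> bw k h (n - m)))"
      using le by (rule UN_I[rotated])
  next
    assume "w \<in> (\<Union>m\<in>{..n}. (\<lambda>(u,v). u @ False # v) ` (bw k 0 m \<times> bw k h (n - m)))"
    then obtain m u v where "m \<le> n" "w = u @ False # v" "bal k 0 u" "cnt u = m" "bal k h v" "cnt v = n - m"
      by (auto simp: bw_def)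
    then have "bal k (0 + Suc h) w" using bal_decomp[of k 0 h w] by blast
    moreover have "cnt w = n" using \<open>w = u @ False # v\<close> \<open>cnt u = m\<close> \<open>cnt v = n - m\<close> \<open>m \<le> n\<close>
      by (simp add: cnt_def)
    ultimately show "w \<in> bw k (Suc h) n" by (simp add: bw_def)
  qed
qed

lemma bw_conv: "k \<ge> 1 \<Longrightarrow> card (bw k (Suc h) n) = (\<Sum>m\<le>n. card (bw k 0 m) * card (bw k h (n - m)))"
proof -
  assume k: "k \<ge> 1"
  let ?f = "\<lambda>(u,v). u @ False # (v::bool list)"
  have inj: "inj_on ?f (bw k 0 m \<times> bw k h (n - m))" for m
    by (auto simp: inj_on_def bw_def dest: bal_uniq)
  have "card (bw k (Suc h) n) = (\<Sum>m\<le>n. card (?f ` (bw k 0 m \<times> bw k h (n - m))))"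
    unfolding bw_conv_set
  proof (rule card_UN_disjoint)
    show "finite {..n}" by simp
    show "\<forall>m\<in>{..n}. finite (?f ` (bw k 0 m \<times> bw k h (n - m)))"
      using bw_finite[OF k] by auto
    show "\<forall>m\<in>{..n}. \<forall>m'\<in>{..n}. m \<noteq> m' \<longrightarrow> ?f ` (bw k 0 m \<times> bw k h (n - m)) \<inter> ?f ` (bw k 0 m' \<times> bw k h (n - m')) = {}"
      by (auto simp: bw_def dest: bal_uniq)
  qed
  also have "\<dots> = (\<Sum>m\<le>n. card (bw k 0 m) * card (bw k h (n - m)))"
    by (rule sum.cong) (simp_all add: card_image[OF inj] card_cartesian_product)
  finally show ?thesis .
qed


definition G :: "nat \<Rightarrow> nat \<Rightarrow> nat \<Rightarrow> int" where
  "G k r n = int ((k*n+r-1) choose n) - int (k-1) * (if n = 0 then 0 else int ((k*n+r-1) choose (n-1)))"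

lemma absorb: "(m choose Suc n) * Suc n = (m choose n) * (m - n)"
proof -
  have a: "Suc m * (m choose n) = (Suc m choose Suc n) * Suc n" by (rule Suc_times_binomial_eq)
  have b: "(Suc m choose Suc n) = (m choose n) + (m choose Suc n)" by simp
  show ?thesis
  proof (cases "n \<le> m")
    case True
    from a b have "Suc m * (m choose n) = (m choose n) * Suc n + (m choose Suc n) * Suc n"
      by (simp add: algebra_simps)
    then have "(m choose Suc n) * Suc n = Suc m * (m choose n) - (m choose n) * Suc n" by simp
    also have "\<dots> = (m choose n) * (Suc m - Suc n)" by (simp add: algebra_simps diff_mult_distrib2)
    finally show ?thesis by simp
  next
    case False then show ?thesis by simp
  qed
qed

lemma G0: "r \<ge> 1 \<Longrightarrow> G k r 0 = 1"
  by (simp add: G_def)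

lemma G1: assumes k: "k \<ge> 1" shows "G k 1 (Suc n) = G k k n"
proof -
  define m where "m = k * n + (k - 1)"
  have e1: "k * Suc n + 1 - 1 = Suc m" using k by (simp add: m_def algebra_simps)
  have e2: "k * n + k - 1 = m" using k by (simp add: m_def)
  have mn: "m - n = (k - 1) * Suc n" using k by (simp add: m_def algebra_simps diff_mult_distrib)
  have ab: "(m choose Suc n) = (k - 1) * (m choose n)"
    using absorb[of m n] mn by (metis mult.assoc mult.commute nonzero_mult_div_cancel_right nat.distinct(1) div_mult_self1_is_m zero_less_Suc)
  have "G k 1 (Suc n) = int (Suc m choose Suc n) - int (k-1) * int (Suc m choose n)"
    unfolding G_def e1 by simp
  also have "\<dots> = int (m choose n) + int (m choose Suc n) - int (k-1) * (int (m choose n) + (if n = 0 then 0 else int (m choose (n - 1))))"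
    by (cases n) simp_all
  also have "\<dots> = int (m choose n) - int (k-1) * (if n = 0 then 0 else int (m choose (n - 1)))"
    using ab by (simp add: algebra_simps of_nat_mult[symmetric] del: of_nat_mult)
  also have "\<dots> = G k k n" unfolding G_def e2 ..
  finally show ?thesis .
qed

lemma G2: assumes k: "k \<ge> 1" shows "G k (Suc (Suc h)) (Suc n) = G k (Suc h) (Suc n) + G k (h + k + 1) n"
proof -
  define m where "m = k * n + k + h"
  have e1: "k * Suc n + Suc (Suc h) - 1 = Suc m" by (simp add: m_def algebra_simps)
  have e2: "k * Suc n + Suc h - 1 = m" by (simp add: m_def algebra_simps)
  have e3: "k * n + (h + k + 1) - 1 = m" by (simp add: m_def algebra_simps)
  have p: "int (Suc m choose n) = int (m choose n) + (if n = 0 then 0 else int (m choose (n - 1)))"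
    by (cases n) simp_all
  show ?thesis unfolding G_def e1 e2 e3 using p by (simp add: algebra_simps)
qed

lemma B_eq_G: assumes k: "k \<ge> 1" shows "int (card (bw k h n)) = G k (Suc h) n"
proof (induction n arbitrary: h)
  case 0 then show ?case by (simp add: bw_0 G0)
next
  case (Suc n)
  note IHn = Suc.IH
  show ?case
  proof (induction h)
    case 0
    have "card (bw k 0 (Suc n)) = card (bw k (k - 1) n)"
      unfolding bw_Suc0 by (rule card_image) simp
    then show ?case using IHn[of "k - 1"] G1[OF k, of n] k by simp
  next
    case (Suc h)
    have "card (bw k (Suc h) (Suc n)) = card (Cons False ` bw k h (Suc n)) + card (Cons True ` bw k (h + k) n)"
      unfolding bw_SucSuc[OF k] by (rule card_Un_disjoint) (auto simp: bw_finite[OF k])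
    also have "\<dots> = card (bw k h (Suc n)) + card (bw k (h + k) n)"
      by (simp add: card_image)
    finally show ?case using Suc.IH IHn[of "h + k"] G2[OF k, of h n] by simp
  qed
qed

lemma G_closed: assumes r: "r \<ge> 1" and k: "k \<ge> 1"
  shows "real r / real (k * n + r) * real ((k * n + r) choose n) = of_int (G k r n)"
proof (cases n)
  case 0 have "real r \<noteq> 0" using r by simp
  then show ?thesis using 0 r by (simp add: G_def)
next
  case (Suc n')
  define m where "m = k * n + r - 1"
  have sm: "k * n + r = Suc m" using r by (simp add: m_def)
  define d where "d = (k - 1) * n + r"
  have kn: "n \<le> k * n" using k by simp
  have kn2: "(k - 1) * n = k * n - n" by (simp add: diff_mult_distrib)
  have d1: "Suc m - n = d" using kn kn2 r unfolding d_def m_def by linarith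
  have d2: "m - n' = d" using kn kn2 r Suc unfolding d_def m_def by linarith
  have dpos: "real d > 0" using r unfolding d_def by (simp del: of_nat_add add: of_nat_add[symmetric])
  have A: "d * (Suc m choose n) = Suc m * (m choose n)"
    using binomial_absorb_comp[of "Suc m" n] d1 by simp
  have B: "(m choose n) * n = (m choose n') * d"
    using absorb[of m n'] d2 Suc by simp
  have Ar: "real (Suc m choose n) = real (Suc m) * real (m choose n) / real d"
    using A dpos by (simp add: field_simps of_nat_mult[symmetric] del: of_nat_mult)
  have Br: "real (m choose n') = real (m choose n) * real n / real d"
    using B dpos by (simp add: field_simps of_nat_mult[symmetric] del: of_nat_mult)
  have dr: "real d = (real k - 1) * real n + real r" using k by (simp add: d_def of_nat_diff)
  have G: "of_int (G k r n) = real (m choose n) - (real k - 1) * real (m choose n')"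
    using Suc k unfolding G_def m_def by (simp add: of_nat_diff)
  define c where "c = real (m choose n)"
  have L: "real r / real (Suc m) * (real (Suc m) * c / real d) = real r * c / real d" using dpos
    by (simp add: field_simps del: of_nat_Suc)
  have R: "c - (real k - 1) * (c * real n / real d) = c * (real d - (real k - 1) * real n) / real d"
    using dpos by (simp add: field_simps)
  show ?thesis unfolding sm G Ar Br c_def[symmetric] L R using dr by simp
qed


lemma chain_lt:
  assumes ne: "\<And>j. j \<in> {1..i} \<Longrightarrow> S j \<noteq> {}"
    and adj: "\<And>j x y. 1 \<le> j \<Longrightarrow> Suc j \<le> i \<Longrightarrow> x \<in> S j \<Longrightarrow> y \<in> S (Suc j) \<Longrightarrow> x < y"
    and l: "1 \<le> l" and x: "x \<in> S l"
  shows "l + Suc d \<le> i \<Longrightarrow> y \<in> S (l + Suc d) \<Longrightarrow> x < (y::nat)"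
proof (induction d arbitrary: y)
  case 0 then show ?case using adj[of l x y] l x by simp
next
  case (Suc d)
  obtain z where z: "z \<in> S (l + Suc d)" using ne[of "l + Suc d"] Suc.prems l by auto
  have "x < z" using Suc.IH[OF _ z] Suc.prems by simp
  moreover have "z < y" using adj[of "l + Suc d" z y] Suc.prems z l by simp
  ultimately show ?case by simp
qed

lemma chain_lt':
  assumes ne: "\<And>j. j \<in> {1..i} \<Longrightarrow> S j \<noteq> {}"
    and adj: "\<And>j x y. 1 \<le> j \<Longrightarrow> Suc j \<le> i \<Longrightarrow> x \<in> S j \<Longrightarrow> y \<in> S (Suc j) \<Longrightarrow> x < y"
    and "1 \<le> l" "l < j" "j \<le> i" "x \<in> S l" "y \<in> S j"
  shows "x < (y::nat)"
proof -
  obtain d where d: "j = Suc (l + d)" using less_imp_Suc_add[OF \<open>l < j\<close>] by blast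
  have "l + Suc d \<le> i" "y \<in> S (l + Suc d)" using d assms by simp_all
  note cl = chain_lt[where S=S and i=i and l=l and x=x and d=d and y=y]
  show ?thesis by (rule cl) (use ne adj assms \<open>l + Suc d \<le> i\<close> \<open>y \<in> S (l + Suc d)\<close> in auto)
qed

lemma ordseq:
  fixes S :: "nat \<Rightarrow> nat set"
  assumes fin: "\<And>j. j \<in> {1..i} \<Longrightarrow> finite (S j) \<and> card (S j) = c"
    and adj: "\<And>j x y. 1 \<le> j \<Longrightarrow> Suc j \<le> i \<Longrightarrow> x \<in> S j \<Longrightarrow> y \<in> S (Suc j) \<Longrightarrow> x < y"
    and x: "x \<in> S j" and j: "j \<in> {1..i}"
  shows "(j - 1) * c < card {y \<in> (\<Union>l\<in>{1..i}. S l). y \<le> x} \<and> card {y \<in> (\<Union>l\<in>{1..i}. S l). y \<le> x} \<le> j * c"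
proof -
  let ?U = "\<Union>l\<in>{1..i}. S l"
  have c: "c \<ge> 1" using fin[OF j] x by (metis One_nat_def Suc_leI card_gt_0_iff empty_iff)
  have ne: "\<And>j. j \<in> {1..i} \<Longrightarrow> S j \<noteq> {}" using fin c by fastforce
  note lt = chain_lt'[where S=S and i=i, OF ne adj]
  have finU: "finite {y \<in> ?U. y \<le> x}" by simp
  have up: "{y \<in> ?U. y \<le> x} \<subseteq> (\<Union>l\<in>{1..j}. S l)"
  proof
    fix y assume "y \<in> {y \<in> ?U. y \<le> x}"
    then obtain l where l: "l \<in> {1..i}" "y \<in> S l" "y \<le> x" by auto
    have "l \<le> j"
    proof (rule ccontr)
      assume "\<not> l \<le> j" then have "x < y" using lt[where l=j and j=l and x=x and y=y] l j x by auto
      then show False using l by simp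
    qed
    then show "y \<in> (\<Union>l\<in>{1..j}. S l)" using l by auto
  qed
  have "card {y \<in> ?U. y \<le> x} \<le> card (\<Union>l\<in>{1..j}. S l)"
    by (rule card_mono[OF _ up]) (use fin j in auto)
  also have "\<dots> \<le> (\<Sum>l\<in>{1..j}. card (S l))" by (rule card_UN_le) simp
  also have "\<dots> = j * c" using fin j by simp
  finally have U: "card {y \<in> ?U. y \<le> x} \<le> j * c" .
  have lo: "insert x (\<Union>l\<in>{1..<j}. S l) \<subseteq> {y \<in> ?U. y \<le> x}"
  proof
    fix y assume "y \<in> insert x (\<Union>l\<in>{1..<j}. S l)"
    then show "y \<in> {y \<in> ?U. y \<le> x}"
    proof
      assume "y = x" then show ?thesis using x j by auto
    next
      assume "y \<in> (\<Union>l\<in>{1..<j}. S l)"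
      then obtain l where "l \<in> {1..<j}" "y \<in> S l" by auto
      then show ?thesis using lt[where l=l and j=j and x=y and y=x] x j by fastforce
    qed
  qed
  have xn: "x \<notin> (\<Union>l\<in>{1..<j}. S l)"
  proof
    assume "x \<in> (\<Union>l\<in>{1..<j}. S l)"
    then obtain l where "l \<in> {1..<j}" "x \<in> S l" by auto
    then show False using lt[where l=l and j=j and x=x and y=x] x j by fastforce
  qed
  have "card (\<Union>l\<in>{1..<j}. S l) = (\<Sum>l\<in>{1..<j}. card (S l))"
  proof (rule card_UN_disjoint)
    show "\<forall>l\<in>{1..<j}. finite (S l)" using fin j by auto
    show "\<forall>l\<in>{1..<j}. \<forall>l'\<in>{1..<j}. l \<noteq> l' \<longrightarrow> S l \<inter> S l' = {}"
    proof (intro ballI impI)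
      fix l l' assume a: "l \<in> {1..<j}" "l' \<in> {1..<j}" "l \<noteq> l'"
      show "S l \<inter> S l' = {}"
      proof (rule ccontr)
        assume "S l \<inter> S l' \<noteq> {}"
        then obtain z where "z \<in> S l" "z \<in> S l'" by auto
        then show False using a lt[where l=l and j=l' and x=z and y=z] lt[where l=l' and j=l and x=z and y=z] j by (cases "l < l'") auto
      qed
    qed
  qed simp
  also have "\<dots> = (j - 1) * c" using fin j by simp
  finally have cu: "card (\<Union>l\<in>{1..<j}. S l) = (j - 1) * c" .
  have "card (insert x (\<Union>l\<in>{1..<j}. S l)) = (j - 1) * c + 1"
    using cu xn fin j by (subst card_insert_disjoint) auto
  moreover have "card (insert x (\<Union>l\<in>{1..<j}. S l)) \<le> card {y \<in> ?U. y \<le> x}"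
    by (rule card_mono[OF finU lo])
  ultimately show ?thesis using U by simp
qed

definition rk :: "nat set \<Rightarrow> nat \<Rightarrow> nat" where "rk X x = card {y \<in> X. y \<le> x}"

lemma rk_bij: assumes "finite X" shows "bij_betw (rk X) X {1..card X}"
proof -
  have mono: "rk X x < rk X y" if "x \<in> X" "y \<in> X" "x < y" for x y
  proof -
    have "{z \<in> X. z \<le> x} \<subseteq> {z \<in> X. z \<le> y}" using that by auto
    moreover have "y \<notin> {z \<in> X. z \<le> x}" "y \<in> {z \<in> X. z \<le> y}" using that by auto
    ultimately have "{z \<in> X. z \<le> x} \<subset> {z \<in> X. z \<le> y}" by blast
    from psubset_card_mono[OF _ this] assms show ?thesis unfolding rk_def by auto
  
  qed
  have inj: "inj_on (rk X) X"
  proof (rule inj_onI)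
    fix x y assume "x \<in> X" "y \<in> X" "rk X x = rk X y"
    then show "x = y" using mono[of x y] mono[of y x] by (cases x y rule: linorder_cases) auto
  qed
  have sub: "rk X ` X \<subseteq> {1..card X}"
  proof
    fix z assume "z \<in> rk X ` X"
    then obtain x where x: "x \<in> X" "z = rk X x" by auto
    have "1 \<le> rk X x" unfolding rk_def using x assms
      by (metis (mono_tags, lifting) One_nat_def Suc_leI card_gt_0_iff empty_iff finite_subset mem_Collect_eq order_refl subsetI)
    moreover have "rk X x \<le> card X" unfolding rk_def by (rule card_mono) (use assms in auto)
    ultimately show "z \<in> {1..card X}" using x by simp
  qed
  have "rk X ` X = {1..card X}"
    by (rule card_subset_eq) (use sub card_image[OF inj] in auto)
  then show ?thesis using inj by (simp add: bij_betw_def)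
qed

lemma rk_card: assumes "finite X" "I \<subseteq> {1..card X}" shows "card {x \<in> X. rk X x \<in> I} = card I"
proof -
  have b: "bij_betw (rk X) X {1..card X}" by (rule rk_bij[OF assms(1)])
  have im: "rk X ` X = {1..card X}" using b unfolding bij_betw_def by simp
  have "rk X ` {x \<in> X. rk X x \<in> I} = I"
  proof
    show "rk X ` {x \<in> X. rk X x \<in> I} \<subseteq> I" by auto
    show "I \<subseteq> rk X ` {x \<in> X. rk X x \<in> I}"
    proof
      fix z assume z: "z \<in> I"
      then have "z \<in> rk X ` X" using im assms(2) by auto
      then obtain x where "x \<in> X" "z = rk X x" by auto
      then show "z \<in> rk X ` {x \<in> X. rk X x \<in> I}" using z by auto
    qed
  qed
  moreover have "inj_on (rk X) {x \<in> X. rk X x \<in> I}" using b unfolding bij_betw_def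
    by (rule inj_on_subset[OF conjunct1]) auto
  ultimately show ?thesis using card_image by fastforce
qed

lemma rk_mono: "finite X \<Longrightarrow> x \<le> y \<Longrightarrow> rk X x \<le> rk X y"
  unfolding rk_def by (rule card_mono) auto


lemma cells_rect2: "cells (rect2 i) = {1,2} \<times> {1..i}"
  unfolding cells_def rect2_def by (auto simp: nth_Cons split: nat.splits)

lemma cells_rect2_iff: "(a, j) \<in> cells (rect2 i) \<longleftrightarrow> (a = 1 \<or> a = 2) \<and> 1 \<le> j \<and> j \<le> i"
  by (auto simp: cells_rect2)

lemma total_rect2: assumes "k \<ge> 1" shows "total_density (rect2 i) (rho_k k) = k * i"
proof -
  have "total_density (rect2 i) (rho_k k) = (\<Sum>a\<in>{1,2}. \<Sum>j\<in>{1..i}. rho_k k (a, j))"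
    unfolding total_density_def cells_rect2 by (simp add: sum.cartesian_product)
  also have "\<dots> = i + i * (k - 1)" by (simp add: rho_k_def)
  also have "\<dots> = k * i" using assms by (simp add: algebra_simps diff_mult_distrib2)
  finally show ?thesis .
qed

definition row1 :: "(nat \<times> nat \<Rightarrow> nat set) \<Rightarrow> nat \<Rightarrow> nat set" where
  "row1 T i = (\<Union>j\<in>{1..i}. T (1, j))"
definition row2 :: "(nat \<times> nat \<Rightarrow> nat set) \<Rightarrow> nat \<Rightarrow> nat set" where
  "row2 T i = (\<Union>j\<in>{1..i}. T (2, j))"

definition Good :: "nat \<Rightarrow> nat \<Rightarrow> nat set set" where
  "Good k i = {A. A \<subseteq> {1..k*i} \<and> card A = i \<and>
     (\<forall>m\<le>k*i. card ({1..m} - A) \<le> (k - 1) * card (A \<inter> {1..m}))}"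

context
  fixes k i :: nat and T :: "nat \<times> nat \<Rightarrow> nat set"
  assumes k: "k \<ge> 1" and T: "T \<in> SVT (rect2 i) (rho_k k)"
begin

lemma T_all: "(\<forall>c. c \<notin> cells (rect2 i) \<longrightarrow> T c = {}) \<and>
  (\<forall>c\<in>cells (rect2 i). finite (T c) \<and> card (T c) = rho_k k c) \<and>
  (\<forall>c\<in>cells (rect2 i). \<forall>d\<in>cells (rect2 i). c \<noteq> d \<longrightarrow> T c \<inter> T d = {}) \<and>
  (\<Union>c\<in>cells (rect2 i). T c) = {1..total_density (rect2 i) (rho_k k)} \<and>
  (\<forall>a j. (a, j) \<in> cells (rect2 i) \<and> (a, Suc j) \<in> cells (rect2 i) \<longrightarrow>
            (\<forall>x\<in>T (a, j). \<forall>y\<in>T (a, Suc j). x < y)) \<and>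
  (\<forall>a j. (a, j) \<in> cells (rect2 i) \<and> (Suc a, j) \<in> cells (rect2 i) \<longrightarrow>
            (\<forall>x\<in>T (a, j). \<forall>y\<in>T (Suc a, j). x < y))"
  using T[unfolded SVT_def mem_Collect_eq] .

lemmas T_c1 = T_all[THEN conjunct1]
lemmas T_c2 = T_all[THEN conjunct2, THEN conjunct1]
lemmas T_c3 = T_all[THEN conjunct2, THEN conjunct2, THEN conjunct1]
lemmas T_c4 = T_all[THEN conjunct2, THEN conjunct2, THEN conjunct2, THEN conjunct1]
lemmas T_c5 = T_all[THEN conjunct2, THEN conjunct2, THEN conjunct2, THEN conjunct2, THEN conjunct1]
lemmas T_c6 = T_all[THEN conjunct2, THEN conjunct2, THEN conjunct2, THEN conjunct2, THEN conjunct2]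

lemma T_out: "c \<notin> cells (rect2 i) \<Longrightarrow> T c = {}"
  using T_c1 by blast
lemma T_fin1: "j \<in> {1..i} \<Longrightarrow> finite (T (1, j)) \<and> card (T (1, j)) = 1"
  using T_c2 by (auto simp: cells_rect2_iff rho_k_def)
lemma T_fin2: "j \<in> {1..i} \<Longrightarrow> finite (T (2, j)) \<and> card (T (2, j)) = k - 1"
  using T_c2 by (auto simp: cells_rect2_iff rho_k_def)
lemma T_disj: "c \<in> cells (rect2 i) \<Longrightarrow> d \<in> cells (rect2 i) \<Longrightarrow> c \<noteq> d \<Longrightarrow> T c \<inter> T d = {}"
  using T_c3 by blast
lemma T_union: "(\<Union>c\<in>cells (rect2 i). T c) = {1..k*i}"
  using T_c4 by (simp add: total_rect2[OF k])
lemma T_adj: "a \<in> {1,2} \<Longrightarrow> 1 \<le> j \<Longrightarrow> Suc j \<le> i \<Longrightarrow> x \<in> T (a, j) \<Longrightarrow> y \<in> T (a, Suc j) \<Longrightarrow> x < y"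
proof -
  assume a: "a \<in> {1,2}" "1 \<le> j" "Suc j \<le> i" "x \<in> T (a, j)" "y \<in> T (a, Suc j)"
  have "(a, j) \<in> cells (rect2 i) \<and> (a, Suc j) \<in> cells (rect2 i)" using a by (auto simp: cells_rect2_iff)
  then show "x < y" using T_c5 a by blast
qed
lemma T_col: "j \<in> {1..i} \<Longrightarrow> x \<in> T (1, j) \<Longrightarrow> y \<in> T (2, j) \<Longrightarrow> x < y"
proof -
  assume a: "j \<in> {1..i}" "x \<in> T (1, j)" "y \<in> T (2, j)"
  have "(1, j) \<in> cells (rect2 i) \<and> (Suc 1, j) \<in> cells (rect2 i)" using a by (auto simp: cells_rect2_iff)
  then show "x < y" using T_c6 a by (metis one_add_one plus_1_eq_Suc)
qed

lemma T_rows: "row1 T i \<union> row2 T i = {1..k*i}"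
proof -
  have "(\<Union>c\<in>cells (rect2 i). T c) = row1 T i \<union> row2 T i"
    unfolding cells_rect2 row1_def row2_def by auto
  then show ?thesis using T_union by simp
qed

lemma T_rows_disj: "row1 T i \<inter> row2 T i = {}"
  unfolding row1_def row2_def using T_disj by (fastforce simp: cells_rect2_iff)

lemma T_row2: "row2 T i = {1..k*i} - row1 T i"
  using T_rows T_rows_disj by blast

lemma T_card_row: "a \<in> {1,2} \<Longrightarrow> (\<forall>j\<in>{1..i}. card (T (a, j)) = c) \<Longrightarrow> J \<subseteq> {1..i} \<Longrightarrow> card (\<Union>j\<in>J. T (a, j)) = card J * c"
proof -
  assume a: "a \<in> {1,2}" and c: "\<forall>j\<in>{1..i}. card (T (a, j)) = c" and J: "J \<subseteq> {1..i}"
  have fJ: "finite J" using J finite_subset by blast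
  have "card (\<Union>j\<in>J. T (a, j)) = (\<Sum>j\<in>J. card (T (a, j)))"
  proof (rule card_UN_disjoint[OF fJ])
    show "\<forall>j\<in>J. finite (T (a, j))" using J a T_fin1 T_fin2 by auto
    show "\<forall>j\<in>J. \<forall>l\<in>J. j \<noteq> l \<longrightarrow> T (a, j) \<inter> T (a, l) = {}"
      using J a T_disj by (auto simp: cells_rect2_iff subset_iff)
  qed
  also have "\<dots> = (\<Sum>j\<in>J. c)" by (rule sum.cong) (use c J in auto)
  also have "\<dots> = card J * c" by simp
  finally show ?thesis .
qed

lemma T_card_row1: "card (row1 T i) = i"
  unfolding row1_def using T_card_row[of 1 1 "{1..i}"] T_fin1 by simp

lemma T_good: "row1 T i \<in> Good k i"
proof -
  let ?A = "row1 T i"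
  have Asub: "?A \<subseteq> {1..k*i}" using T_rows by blast
  have bal: "card ({1..m} - ?A) \<le> (k - 1) * card (?A \<inter> {1..m})" if m: "m \<le> k * i" for m
  proof -
    define J where "J = {j\<in>{1..i}. \<exists>y\<in>T (2, j). y \<le> m}"
    have J: "J \<subseteq> {1..i}" by (auto simp: J_def)
    have "{1..m} - ?A \<subseteq> (\<Union>j\<in>J. T (2, j))"
    proof
      fix y assume y: "y \<in> {1..m} - ?A"
      then have "y \<in> row2 T i" using T_row2 m by auto
      then obtain j where "j \<in> {1..i}" "y \<in> T (2, j)" by (auto simp: row2_def)
      then show "y \<in> (\<Union>j\<in>J. T (2, j))" using y by (auto simp: J_def)
    qed
    then have "card ({1..m} - ?A) \<le> card (\<Union>j\<in>J. T (2, j))"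
      by (rule card_mono[rotated]) (use J T_fin2 finite_subset[OF J] in auto)
    also have "\<dots> = card J * (k - 1)" using T_card_row[of 2 "k-1" J] J T_fin2 by simp
    also have "card J = card (\<Union>j\<in>J. T (1, j))" using T_card_row[of 1 1 J] J T_fin1 by simp
    also have "card (\<Union>j\<in>J. T (1, j)) \<le> card (?A \<inter> {1..m})"
    proof (rule card_mono)
      show "finite (?A \<inter> {1..m})" by simp
      show "(\<Union>j\<in>J. T (1, j)) \<subseteq> ?A \<inter> {1..m}"
      proof
        fix x assume "x \<in> (\<Union>j\<in>J. T (1, j))"
        then obtain j y where j: "j \<in> {1..i}" "x \<in> T (1, j)" "y \<in> T (2, j)" "y \<le> m"
          by (auto simp: J_def)
        have "x < y" by (rule T_col[OF j(1-3)])
        moreover have "x \<in> ?A" using j by (auto simp: row1_def)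
        moreover have "x \<ge> 1" using Asub \<open>x \<in> ?A\<close> by auto
        ultimately show "x \<in> ?A \<inter> {1..m}" using j by auto
      qed
    qed
    finally show ?thesis by (simp add: mult.commute)
  qed
  show ?thesis unfolding Good_def using Asub T_card_row1 bal by blast
qed

end

definition TA :: "nat \<Rightarrow> nat \<Rightarrow> nat set \<Rightarrow> nat \<times> nat \<Rightarrow> nat set" where
  "TA k i A = (\<lambda>c. if c \<in> cells (rect2 i) then
      (if fst c = 1 then {x \<in> A. rk A x = snd c}
       else {x \<in> {1..k*i} - A. rk ({1..k*i} - A) x \<in> {(snd c - 1) * (k - 1)<..snd c * (k - 1)}})
     else {})"

context
  fixes k i :: nat and A :: "nat set"
  assumes k: "k \<ge> 1" and Asub: "A \<subseteq> {1..k*i}" and cardA: "card A = i"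
begin

lemma finA: "finite A" using Asub finite_subset by blast

lemma cardB: "card ({1..k*i} - A) = (k - 1) * i"
proof -
  have "card ({1..k*i} - A) = k * i - i" using Asub cardA by (simp add: card_Diff_subset finA)
  also have "\<dots> = (k - 1) * i" by (simp add: diff_mult_distrib)
  finally show ?thesis .
qed

lemma TA1: "j \<in> {1..i} \<Longrightarrow> TA k i A (1, j) = {x \<in> A. rk A x \<in> {j}}"
  by (simp add: TA_def cells_rect2_iff)

lemma TA2: "j \<in> {1..i} \<Longrightarrow> TA k i A (2, j) = {x \<in> {1..k*i} - A. rk ({1..k*i} - A) x \<in> {(j - 1) * (k - 1)<..j * (k - 1)}}"
  by (simp add: TA_def cells_rect2_iff)

lemma TA1_card: "j \<in> {1..i} \<Longrightarrow> finite (TA k i A (1, j)) \<and> card (TA k i A (1, j)) = 1"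
proof -
  assume j: "j \<in> {1..i}"
  have e: "TA k i A (1, j) = {x \<in> A. rk A x \<in> {j}}" by (rule TA1[OF j])
  have "card {x \<in> A. rk A x \<in> {j}} = card {j}" by (rule rk_card[OF finA]) (use j cardA in auto)
  then show ?thesis unfolding e using finA by simp
qed

lemma TA2_card: "j \<in> {1..i} \<Longrightarrow> finite (TA k i A (2, j)) \<and> card (TA k i A (2, j)) = k - 1"
proof -
  assume j: "j \<in> {1..i}"
  have sub: "{(j - 1) * (k - 1)<..j * (k - 1)} \<subseteq> {1..card ({1..k*i} - A)}"
  proof -
    have h: "j * (k - 1) \<le> (k - 1) * i" using j by (simp add: mult.commute)
    show ?thesis unfolding cardB
    proof
      fix x assume x: "x \<in> {(j - 1) * (k - 1)<..j * (k - 1)}"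
      then have "1 \<le> x" by simp
      moreover have "x \<le> j * (k - 1)" using x by simp
      then have "x \<le> (k - 1) * i" using h by linarith
      ultimately show "x \<in> {1..(k - 1) * i}" by simp
    qed
  qed
  have "card {(j - 1) * (k - 1)<..j * (k - 1)} = k - 1" using j
    by (simp add: diff_mult_distrib)
  then show ?thesis using rk_card[OF _ sub] j by (simp add: TA2)
qed

end

context
  fixes k i :: nat and T :: "nat \<times> nat \<Rightarrow> nat set"
  assumes k: "k \<ge> 1" and T: "T \<in> SVT (rect2 i) (rho_k k)"
begin

lemma T_eq: "TA k i (row1 T i) = T"
proof
  fix c
  let ?A = "row1 T i"
  have Asub: "?A \<subseteq> {1..k*i}" using T_rows[OF k T] by blast
  have cA: "card ?A = i" using T_card_row1[OF k T] .
  show "TA k i ?A c = T c"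
  proof (cases "c \<in> cells (rect2 i)")
    case False then show ?thesis using T_out[OF k T False] by (simp add: TA_def)
  next
    case True
    then obtain a j where c: "c = (a, j)" "a = 1 \<or> a = 2" "j \<in> {1..i}"
      by (cases c) (auto simp: cells_rect2_iff)
    show ?thesis
    proof (cases "a = 1")
      case a: True
      have sub: "T (1, j) \<subseteq> TA k i ?A (1, j)"
      proof
        fix x assume x: "x \<in> T (1, j)"
        have "(j - 1) * 1 < card {y \<in> (\<Union>l\<in>{1..i}. T (1, l)). y \<le> x} \<and> card {y \<in> (\<Union>l\<in>{1..i}. T (1, l)). y \<le> x} \<le> j * 1"
          by (rule ordseq[where S="\<lambda>l. T (1, l)"]) (use T_fin1[OF k T] T_adj[OF k T, of 1] x c in auto)
        then have "rk ?A x = j" unfolding rk_def row1_def by linarith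
        moreover have "x \<in> ?A" using x c unfolding row1_def by auto
        ultimately show "x \<in> TA k i ?A (1, j)" using TA1[OF k Asub cA c(3)] by simp
      qed
      have "T (1, j) = TA k i ?A (1, j)"
        by (rule card_subset_eq[OF _ sub]) (use TA1_card[OF k Asub cA c(3)] T_fin1[OF k T c(3)] in auto)
      then show ?thesis using a c by simp
    next
      case a: False
      then have a2: "a = 2" using c by simp
      have B: "{1..k*i} - ?A = (\<Union>l\<in>{1..i}. T (2, l))" using T_row2[OF k T] unfolding row2_def by simp
      have sub: "T (2, j) \<subseteq> TA k i ?A (2, j)"
      proof
        fix x assume x: "x \<in> T (2, j)"
        have "(j - 1) * (k - 1) < card {y \<in> (\<Union>l\<in>{1..i}. T (2, l)). y \<le> x} \<and> card {y \<in> (\<Union>l\<in>{1..i}. T (2, l)). y \<le> x} \<le> j * (k - 1)"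
          by (rule ordseq[where S="\<lambda>l. T (2, l)"]) (use T_fin2[OF k T] T_adj[OF k T, of 2] x c in auto)
        then have "rk ({1..k*i} - ?A) x \<in> {(j - 1) * (k - 1)<..j * (k - 1)}" unfolding rk_def B by simp
        moreover have "x \<in> {1..k*i} - ?A" using x c unfolding B by auto
        ultimately show "x \<in> TA k i ?A (2, j)" using TA2[OF k Asub cA c(3)] by simp
      qed
      have "T (2, j) = TA k i ?A (2, j)"
        by (rule card_subset_eq[OF _ sub]) (use TA2_card[OF k Asub cA c(3)] T_fin2[OF k T c(3)] in auto)
      then show ?thesis using a2 c by simp
    qed
  qed
qed

end


lemma div_bucket:
  fixes K q i :: nat
  assumes K: "K \<ge> 1" and q: "1 \<le> q" "q \<le> K * i"
  shows "\<exists>j. 1 \<le> j \<and> j \<le> i \<and> (j - 1) * K < q \<and> q \<le> j * K"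
proof -
  define j where "j = (q - 1) div K + 1"
  have a: "(q - 1) div K * K \<le> q - 1" by (rule div_times_less_eq_dividend)
  have m: "(q - 1) mod K < K" using K by simp
  have e: "(q - 1) div K * K + (q - 1) mod K = q - 1" by (rule div_mult_mod_eq)
  have f: "((q - 1) div K + 1) * K = (q - 1) div K * K + K" by (simp add: algebra_simps)
  have b: "q - 1 < ((q - 1) div K + 1) * K" using m e f by linarith
  have c: "(q - 1) div K < i"
    using q K by (simp add: div_less_iff_less_mult mult.commute)
  have a': "(q - 1) div K * K < q" using a q by linarith
  have b': "q \<le> ((q - 1) div K + 1) * K" using b by linarith
  show ?thesis
    by (rule exI[of _ "(q - 1) div K + 1"]) (use a' b' c in simp)
qed

context
  fixes k i :: nat and A :: "nat set"
  assumes k: "k \<ge> 1" and AG: "A \<in> Good k i"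
begin

lemma Asub: "A \<subseteq> {1..k*i}" using AG by (simp add: Good_def)
lemma cardA: "card A = i" using AG by (simp add: Good_def)
lemma ballot: "m \<le> k * i \<Longrightarrow> card ({1..m} - A) \<le> (k - 1) * card (A \<inter> {1..m})"
  using AG by (simp add: Good_def)
lemma finA': "finite A" using Asub finite_subset by blast

lemma rkA: "rk A y = card (A \<inter> {1..y})"
proof -
  have "{z \<in> A. z \<le> y} = A \<inter> {1..y}" using Asub by auto
  then show ?thesis by (simp add: rk_def)
qed

lemma rkB: "y \<le> k * i \<Longrightarrow> rk ({1..k*i} - A) y = card ({1..y} - A)"
proof -
  assume "y \<le> k * i"
  then have "{z \<in> {1..k*i} - A. z \<le> y} = {1..y} - A" by auto
  then show ?thesis by (simp add: rk_def)
qed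

lemma rkA_img: "rk A ` A = {1..i}"
  using rk_bij[OF finA'] cardA by (simp add: bij_betw_def)

lemma row1_TA: "row1 (TA k i A) i = A"
proof -
  have "row1 (TA k i A) i = (\<Union>j\<in>{1..i}. {x \<in> A. rk A x \<in> {j}})"
    unfolding row1_def using TA1[OF k Asub cardA] by simp
  also have "\<dots> = A" using rkA_img by auto
  finally show ?thesis .
qed

lemma TA_svt: "TA k i A \<in> SVT (rect2 i) (rho_k k)"
proof -
  let ?T = "TA k i A"
  let ?B = "{1..k*i} - A"
  have finB: "finite ?B" by simp
  have rkB_img: "rk ?B ` ?B = {1..(k - 1) * i}"
    using rk_bij[OF finB] cardB[OF k Asub cardA] by (simp add: bij_betw_def)
  have c1: "\<forall>c. c \<notin> cells (rect2 i) \<longrightarrow> ?T c = {}" by (simp add: TA_def)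
  have c2: "\<forall>c\<in>cells (rect2 i). finite (?T c) \<and> card (?T c) = rho_k k c"
    using TA1_card[OF k Asub cardA] TA2_card[OF k Asub cardA]
    by (auto simp: cells_rect2 rho_k_def)
  have c3: "\<forall>c\<in>cells (rect2 i). \<forall>d\<in>cells (rect2 i). c \<noteq> d \<longrightarrow> ?T c \<inter> ?T d = {}"
  proof (intro ballI impI)
    fix c d assume c: "c \<in> cells (rect2 i)" and d: "d \<in> cells (rect2 i)" and cd: "c \<noteq> d"
    obtain a j where aj: "c = (a, j)" "a = 1 \<or> a = 2" "j \<in> {1..i}" using c by (auto simp: cells_rect2)
    obtain b l where bl: "d = (b, l)" "b = 1 \<or> b = 2" "l \<in> {1..i}" using d by (auto simp: cells_rect2)
    show "?T c \<inter> ?T d = {}"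
    proof (cases "a = b")
      case True
      then have jl: "j \<noteq> l" using cd aj bl by simp
      show ?thesis
      proof (cases "a = 1")
        case True then show ?thesis using aj bl \<open>a = b\<close> jl TA1[OF k Asub cardA] by auto
      next
        case False
        then have a2: "a = 2" "b = 2" using aj \<open>a = b\<close> by auto
        have "x \<notin> ?T (2, l)" if x: "x \<in> ?T (2, j)" for x
        proof
          assume "x \<in> ?T (2, l)"
          then have "(l - 1) * (k - 1) < rk ?B x \<and> rk ?B x \<le> l * (k - 1)" using TA2[OF k Asub cardA bl(3)] by simp
          moreover have "(j - 1) * (k - 1) < rk ?B x \<and> rk ?B x \<le> j * (k - 1)" using x TA2[OF k Asub cardA aj(3)] by simp
          ultimately show False using jl
          proof (cases "j < l")
            case True
            then have "j * (k - 1) \<le> (l - 1) * (k - 1)" by (intro mult_le_mono1) simp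
            then show False using \<open>(l - 1) * (k - 1) < rk ?B x \<and> rk ?B x \<le> l * (k - 1)\<close>
              \<open>(j - 1) * (k - 1) < rk ?B x \<and> rk ?B x \<le> j * (k - 1)\<close> by linarith
          next
            case False
            then have "l * (k - 1) \<le> (j - 1) * (k - 1)" using jl by (intro mult_le_mono1) simp
            then show False using \<open>(l - 1) * (k - 1) < rk ?B x \<and> rk ?B x \<le> l * (k - 1)\<close>
              \<open>(j - 1) * (k - 1) < rk ?B x \<and> rk ?B x \<le> j * (k - 1)\<close> by linarith
          qed
        qed
        then show ?thesis using aj bl a2 by auto
      qed
    next
      case False
      then have "{a, b} = {1, 2}" using aj bl by auto
      then show ?thesis using aj bl TA1[OF k Asub cardA] TA2[OF k Asub cardA] by auto
    qed
  qed
  have c4: "(\<Union>c\<in>cells (rect2 i). ?T c) = {1..total_density (rect2 i) (rho_k k)}"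
  proof
    show "(\<Union>c\<in>cells (rect2 i). ?T c) \<subseteq> {1..total_density (rect2 i) (rho_k k)}"
      unfolding total_rect2[OF k] using Asub by (auto simp: TA_def split: if_splits)
    show "{1..total_density (rect2 i) (rho_k k)} \<subseteq> (\<Union>c\<in>cells (rect2 i). ?T c)"
    proof
      fix x assume "x \<in> {1..total_density (rect2 i) (rho_k k)}"
      then have x: "x \<in> {1..k*i}" unfolding total_rect2[OF k] .
      show "x \<in> (\<Union>c\<in>cells (rect2 i). ?T c)"
      proof (cases "x \<in> A")
        case True
        then have "rk A x \<in> {1..i}" using rkA_img by auto
        then have "x \<in> ?T (1, rk A x)" "(1, rk A x) \<in> cells (rect2 i)"
          using TA1[OF k Asub cardA, of "rk A x"] True by (auto simp: cells_rect2)
        then show ?thesis by blast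
      next
        case False
        then have xB: "x \<in> ?B" using x by simp
        then have q: "rk ?B x \<in> {1..(k - 1) * i}" using rkB_img by auto
        then have "k - 1 \<ge> 1" by (cases "k - 1") auto
        then obtain j where j: "1 \<le> j" "j \<le> i" "(j - 1) * (k - 1) < rk ?B x" "rk ?B x \<le> j * (k - 1)"
          using div_bucket[of "k - 1" "rk ?B x" i] q by auto
        then have "x \<in> ?T (2, j)" "(2, j) \<in> cells (rect2 i)"
          using TA2[OF k Asub cardA, of j] xB by (auto simp: cells_rect2)
        then show ?thesis by blast
      qed
    qed
  qed
  have c5: "\<forall>a j. (a, j) \<in> cells (rect2 i) \<and> (a, Suc j) \<in> cells (rect2 i) \<longrightarrow>
            (\<forall>x\<in>?T (a, j). \<forall>y\<in>?T (a, Suc j). x < y)"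
  proof (intro allI impI ballI)
    fix a j x y
    assume cj: "(a, j) \<in> cells (rect2 i) \<and> (a, Suc j) \<in> cells (rect2 i)" and x: "x \<in> ?T (a, j)" and y: "y \<in> ?T (a, Suc j)"
    have j1: "j \<in> {1..i}" and j2: "Suc j \<in> {1..i}" and a: "a = 1 \<or> a = 2" using cj by (auto simp: cells_rect2)
    show "x < y"
    proof (cases "a = 1")
      case True
      then have "rk A x = j" "rk A y = Suc j" "x \<in> A" "y \<in> A"
        using x y TA1[OF k Asub cardA j1] TA1[OF k Asub cardA j2] by auto
      then show ?thesis using rk_mono[OF finA', of y x] by (cases "x < y") auto
    next
      case False
      then have a2: "a = 2" using a by simp
      have "rk ?B x \<le> j * (k - 1)" "j * (k - 1) < rk ?B y"
        using x y TA2[OF k Asub cardA j1] TA2[OF k Asub cardA j2] a2 by auto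
      then show ?thesis using rk_mono[OF finB, of y x] by (cases "x < y") auto
    qed
  qed
  have c6: "\<forall>a j. (a, j) \<in> cells (rect2 i) \<and> (Suc a, j) \<in> cells (rect2 i) \<longrightarrow>
            (\<forall>x\<in>?T (a, j). \<forall>y\<in>?T (Suc a, j). x < y)"
  proof (intro allI impI ballI)
    fix a j x y
    assume cj: "(a, j) \<in> cells (rect2 i) \<and> (Suc a, j) \<in> cells (rect2 i)" and x: "x \<in> ?T (a, j)" and y: "y \<in> ?T (Suc a, j)"
    have j1: "j \<in> {1..i}" and a: "a = 1" using cj by (auto simp: cells_rect2)
    have xA: "x \<in> A" "rk A x = j" using x a TA1[OF k Asub cardA j1] by auto
    have yB: "y \<in> ?B" "(j - 1) * (k - 1) < rk ?B y" using y a TA2[OF k Asub cardA j1] by (auto simp: numeral_2_eq_2)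
    have yN: "y \<le> k * i" using yB by simp
    have e1: "(j - 1) * (k - 1) < card ({1..y} - A)" using yB(2) rkB[OF yN] by simp
    have e2: "card ({1..y} - A) \<le> (k - 1) * rk A y" using ballot[OF yN] rkA[of y] by simp
    have e3: "(k - 1) * rk A y = rk A y * (k - 1)" by (rule mult.commute)
    have "(j - 1) * (k - 1) < rk A y * (k - 1)" using e1 e2 e3 by linarith
    then have "j - 1 < rk A y" using mult_less_cancel2 by blast
    then have jy: "j \<le> rk A y" by simp
    show "x < y"
    proof (rule ccontr)
      assume "\<not> x < y"
      then have "y < x" using xA yB by (cases "x = y") auto
      then have "{z \<in> A. z \<le> y} \<subseteq> {z \<in> A. z \<le> x}" "x \<notin> {z \<in> A. z \<le> y}" "x \<in> {z \<in> A. z \<le> x}"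
        using xA by auto
      then have "{z \<in> A. z \<le> y} \<subset> {z \<in> A. z \<le> x}" by blast
      from psubset_card_mono[OF _ this] finA' have "rk A y < rk A x" unfolding rk_def by simp
      then show False using xA jy by simp
    qed
  qed
  show ?thesis unfolding SVT_def mem_Collect_eq using c1 c2 c3 c4 c5 c6 by (intro conjI)
qed

end


lemma SVT_eq_i: assumes k: "k \<ge> 1" and T1: "T \<in> SVT (rect2 i) (rho_k k)" and T2: "T \<in> SVT (rect2 i') (rho_k k)"
  shows "i = i'"
proof (rule ccontr)
  assume ne: "i \<noteq> i'"
  have main: "False" if a: "a < b" and Ta: "T \<in> SVT (rect2 a) (rho_k k)" and Tb: "T \<in> SVT (rect2 b) (rho_k k)" for a b
  proof -
    have "(1, b) \<notin> cells (rect2 a)" using a by (simp add: cells_rect2)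
    then have "T (1, b) = {}" by (rule T_out[OF k Ta])
    moreover have "card (T (1, b)) = 1" using T_fin1[OF k Tb, of b] a by simp
    ultimately show False by simp
  qed
  show False using ne main[OF _ T1 T2] main[OF _ T2 T1] by (cases "i < i'") auto
qed

lemma Good_finite: "finite (Good k i)"
proof -
  have "Good k i \<subseteq> Pow {1..k*i}" by (auto simp: Good_def)
  then show ?thesis by (rule finite_subset) simp
qed

lemma SVT_bij: assumes k: "k \<ge> 1" shows "bij_betw (\<lambda>T. row1 T i) (SVT (rect2 i) (rho_k k)) (Good k i)"
proof (rule bij_betw_byWitness[where f'="TA k i"])
  show "\<forall>T\<in>SVT (rect2 i) (rho_k k). TA k i (row1 T i) = T" using T_eq[OF k] by blast
  show "\<forall>A\<in>Good k i. row1 (TA k i A) i = A" using row1_TA[OF k] by blast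
  show "(\<lambda>T. row1 T i) ` SVT (rect2 i) (rho_k k) \<subseteq> Good k i" using T_good[OF k] by blast
  show "TA k i ` Good k i \<subseteq> SVT (rect2 i) (rho_k k)" using TA_svt[OF k] by blast
qed

lemma SVT_finite: "k \<ge> 1 \<Longrightarrow> finite (SVT (rect2 i) (rho_k k))"
  using bij_betw_finite[OF SVT_bij] Good_finite by blast

lemma SVT_card: "k \<ge> 1 \<Longrightarrow> card (SVT (rect2 i) (rho_k k)) = card (Good k i)"
  using bij_betw_same_card[OF SVT_bij] by blast

lemma card_take: "m \<le> length w \<Longrightarrow> card {x \<in> {1..m}. P (w ! (x - 1))} = length (filter P (take m w))"
proof (induction m)
  case 0 then show ?case by simp
next
  case (Suc m)
  let ?O = "{x \<in> {1..m}. P (w ! (x - 1))}"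
  have fin: "finite ?O" by simp
  have notin: "Suc m \<notin> ?O" by simp
  have IH: "card ?O = length (filter P (take m w))" using Suc by simp
  have t: "take (Suc m) w = take m w @ [w ! m]" using Suc.prems by (simp add: take_Suc_conv_app_nth)
  show ?case
  proof (cases "P (w ! m)")
    case True
    have "{x \<in> {1..Suc m}. P (w ! (x - 1))} = insert (Suc m) ?O" using True by (auto simp: le_Suc_eq)
    then show ?thesis using IH fin notin True t by simp
  next
    case False
    have "{x \<in> {1..Suc m}. P (w ! (x - 1))} = ?O" using False by (auto simp: le_Suc_eq)
    then show ?thesis using IH False t by simp
  qed
qed

lemma all_le_Suc: "(\<forall>j\<le>Suc n. P j) \<longleftrightarrow> P 0 \<and> (\<forall>j\<le>n. P (Suc j))"
proof
  assume h: "\<forall>j\<le>Suc n. P j" then show "P 0 \<and> (\<forall>j\<le>n. P (Suc j))" by simp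
next
  assume h: "P 0 \<and> (\<forall>j\<le>n. P (Suc j))"
  show "\<forall>j\<le>Suc n. P j"
  proof (intro allI impI)
    fix j assume "j \<le> Suc n" then show "P j" using h by (cases j) auto
  qed
qed

lemma bal_prefix: "bal k h w \<longleftrightarrow>
   (\<forall>j\<le>length w. length (filter Not (take j w)) \<le> h + (k - 1) * length (filter id (take j w))) \<and>
   length (filter Not w) = h + (k - 1) * length (filter id w)"
proof (induction w arbitrary: h)
  case Nil then show ?case by auto
next
  case (Cons x w)
  show ?case
  proof (cases x)
    case True
    then show ?thesis using Cons.IH[of "h + (k - 1)"]
      by (simp only: all_le_Suc length_Cons) (simp add: algebra_simps id_def)
  next
    case False
    show ?thesis
    proof (cases h)
      case 0
      show ?thesis
      proof
        assume "bal k h (x # w)" then show "(\<forall>j\<le>length (x # w). length (filter Not (take j (x # w))) \<le> h + (k - 1) * length (filter id (take j (x # w)))) \<and>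
          length (filter Not (x # w)) = h + (k - 1) * length (filter id (x # w))" using 0 False by simp
      next
        assume H: "(\<forall>j\<le>length (x # w). length (filter Not (take j (x # w))) \<le> h + (k - 1) * length (filter id (take j (x # w)))) \<and>
          length (filter Not (x # w)) = h + (k - 1) * length (filter id (x # w))"
        have "1 \<le> length (x # w) \<longrightarrow> length (filter Not (take 1 (x # w))) \<le> h + (k - 1) * length (filter id (take 1 (x # w)))"
          using spec[OF conjunct1[OF H], of 1] .
        then show "bal k h (x # w)" using 0 False by simp
      qed
    next
      case (Suc h')
      then show ?thesis using Cons.IH[of h'] False
        by (simp only: all_le_Suc length_Cons) (simp add: algebra_simps id_def)
    qed
  qed
qed

definition Aw :: "bool list \<Rightarrow> nat set" where "Aw w = {x \<in> {1..length w}. w ! (x - 1)}"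
definition wA :: "nat \<Rightarrow> nat set \<Rightarrow> bool list" where "wA N A = map (\<lambda>x. x \<in> A) [1..<Suc N]"

lemma wA_len: "length (wA N A) = N" by (simp add: wA_def)
lemma wA_nth: "x \<in> {1..N} \<Longrightarrow> wA N A ! (x - 1) = (x \<in> A)"
proof -
  assume x: "x \<in> {1..N}"
  then have l: "x - 1 < length [1..<Suc N]" by (cases x) auto
  have "[1..<Suc N] ! (x - 1) = x" using x by (simp add: nth_upt del: upt_Suc)
  then show ?thesis unfolding wA_def using nth_map[OF l, of "\<lambda>x. x \<in> A"] by simp
qed

lemma Aw_wA: "A \<subseteq> {1..N} \<Longrightarrow> Aw (wA N A) = A"
  unfolding Aw_def wA_len using wA_nth by auto

lemma wA_Aw: "wA (length w) (Aw w) = w"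
proof (rule nth_equalityI)
  show "length (wA (length w) (Aw w)) = length w" by (rule wA_len)
  fix x assume "x < length (wA (length w) (Aw w))"
  then have x: "x < length w" by (simp add: wA_len)
  have "wA (length w) (Aw w) ! (Suc x - 1) = (Suc x \<in> Aw w)" by (rule wA_nth) (use x in simp)
  then show "wA (length w) (Aw w) ! x = w ! x" using x by (simp add: Aw_def)
qed

lemma filter_card_set:
  assumes "m \<le> length w"
  shows "card ({1..m} - Aw w) = length (filter Not (take m w))"
    and "card (Aw w \<inter> {1..m}) = length (filter id (take m w))"
proof -
  have "{1..m} - Aw w = {x \<in> {1..m}. Not (w ! (x - 1))}" using assms by (auto simp: Aw_def)
  then show "card ({1..m} - Aw w) = length (filter Not (take m w))" using card_take[OF assms, of Not] by simp
  have "Aw w \<inter> {1..m} = {x \<in> {1..m}. id (w ! (x - 1))}" using assms by (auto simp: Aw_def)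
  then show "card (Aw w \<inter> {1..m}) = length (filter id (take m w))" using card_take[OF assms, of id] by simp
qed

lemma words_bij: assumes k: "k \<ge> 1" shows "bij_betw Aw (bw k 0 i) (Good k i)"
proof (rule bij_betw_byWitness[where f'="wA (k * i)"])
  show "\<forall>w\<in>bw k 0 i. wA (k * i) (Aw w) = w"
  proof
    fix w assume "w \<in> bw k 0 i"
    then have "length w = k * i" using bal_len[OF k, of 0 w] by (simp add: bw_def)
    then show "wA (k * i) (Aw w) = w" using wA_Aw[of w] by simp
  qed
  show "\<forall>A\<in>Good k i. Aw (wA (k * i) A) = A" using Aw_wA by (auto simp: Good_def)
  show "Aw ` bw k 0 i \<subseteq> Good k i"
  proof
    fix A assume "A \<in> Aw ` bw k 0 i"
    then obtain w where w: "bal k 0 w" "cnt w = i" "A = Aw w" by (auto simp: bw_def)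
    have len: "length w = k * i" using bal_len[OF k w(1)] w(2) by simp
    have "A \<subseteq> {1..k*i}" using w(3) len by (auto simp: Aw_def)
    moreover have "card A = i"
    proof -
      have "Aw w \<inter> {1..length w} = Aw w" by (auto simp: Aw_def)
      then show ?thesis using filter_card_set(2)[of "length w" w] w(2,3) by (simp add: cnt_def)
    qed
    moreover have "\<forall>m\<le>k*i. card ({1..m} - A) \<le> (k - 1) * card (A \<inter> {1..m})"
      using w(1)[unfolded bal_prefix] filter_card_set[of _ w] w(3) len by auto
    ultimately show "A \<in> Good k i" by (simp add: Good_def)
  qed
  show "wA (k * i) ` Good k i \<subseteq> bw k 0 i"
  proof
    fix w assume "w \<in> wA (k * i) ` Good k i"
    then obtain A where A: "A \<in> Good k i" "w = wA (k * i) A" by auto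
    have len: "length w = k * i" using A by (simp add: wA_len)
    have Aw: "Aw w = A" using A Aw_wA by (auto simp: Good_def)
    have Asub: "A \<subseteq> {1..k*i}" and cA: "card A = i" using A by (auto simp: Good_def)
    have cnt: "cnt w = i"
      using filter_card_set(2)[of "length w" w] Aw len cA Asub by (simp add: cnt_def Int_absorb2)
    have pre: "\<forall>j\<le>length w. length (filter Not (take j w)) \<le> 0 + (k - 1) * length (filter id (take j w))"
      using A filter_card_set[of _ w] Aw len by (auto simp: Good_def)
    have "length (filter Not w) = card ({1..k*i} - A)"
      using filter_card_set(1)[of "length w" w] Aw len by simp
    also have "\<dots> = (k - 1) * i" by (rule cardB[OF k Asub cA])
    finally have fin: "length (filter Not w) = 0 + (k - 1) * length (filter id w)"
      using cnt by (simp add: cnt_def)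
    show "w \<in> bw k 0 i" using pre fin cnt bal_prefix[of k 0 w] by (simp add: bw_def)
  qed
qed

lemma SVT_card_bw: "k \<ge> 1 \<Longrightarrow> card (SVT (rect2 i) (rho_k k)) = card (bw k 0 i)"
  using SVT_card bij_betw_same_card[OF words_bij] by metis


definition Tset :: "nat \<Rightarrow> nat \<Rightarrow> nat \<Rightarrow> (nat \<times> nat \<Rightarrow> nat set) list set" where
  "Tset k r n = {Ts :: (nat \<times> nat \<Rightarrow> nat set) list. length Ts = r \<and>
            (\<exists>is :: nat list. length is = r \<and> sum_list is = n \<and>
               (\<forall>j<r. Ts ! j \<in> SVT (rect2 (is ! j)) (rho_k k)))}"

lemma Tset0: "Tset k 0 n = (if n = 0 then {[]} else {})"
  by (auto simp: Tset_def)

lemma TsetSuc: "Tset k (Suc r) n = (\<Union>m\<in>{..n}. (\<lambda>(T, Ts). T # Ts) ` (SVT (rect2 m) (rho_k k) \<times> Tset k r (n - m)))"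
proof (rule set_eqI)
  fix Ts
  show "Ts \<in> Tset k (Suc r) n \<longleftrightarrow> Ts \<in> (\<Union>m\<in>{..n}. (\<lambda>(T, Ts). T # Ts) ` (SVT (rect2 m) (rho_k k) \<times> Tset k r (n - m)))"
  proof
    assume "Ts \<in> Tset k (Suc r) n"
    then obtain ls where h: "length Ts = Suc r" "length ls = Suc r" "sum_list ls = n"
      "\<forall>j<Suc r. Ts ! j \<in> SVT (rect2 (ls ! j)) (rho_k k)" by (auto simp: Tset_def)
    obtain T Ts' where Ts: "Ts = T # Ts'" using h(1) by (cases Ts) auto
    obtain m ls' where isd: "ls = m # ls'" using h(2) by (cases ls) auto
    have T: "T \<in> SVT (rect2 m) (rho_k k)" using h(4)[rule_format, of 0] Ts isd by simp
    have "Ts' \<in> Tset k r (n - m)" unfolding Tset_def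
    proof (intro CollectI conjI exI[of _ ls'])
      show "length Ts' = r" "length ls' = r" using h Ts isd by auto
      show "sum_list ls' = n - m" using h(3) isd by simp
      show "\<forall>j<r. Ts' ! j \<in> SVT (rect2 (ls' ! j)) (rho_k k)"
        using h(4) Ts isd by auto
    qed
    moreover have "m \<le> n" using h(3) isd by simp
    ultimately show "Ts \<in> (\<Union>m\<in>{..n}. (\<lambda>(T, Ts). T # Ts) ` (SVT (rect2 m) (rho_k k) \<times> Tset k r (n - m)))"
      using T Ts by blast
  next
    assume "Ts \<in> (\<Union>m\<in>{..n}. (\<lambda>(T, Ts). T # Ts) ` (SVT (rect2 m) (rho_k k) \<times> Tset k r (n - m)))"
    then obtain m T Ts' where m: "m \<le> n" "T \<in> SVT (rect2 m) (rho_k k)" "Ts' \<in> Tset k r (n - m)" "Ts = T # Ts'"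
      by auto
    then obtain ls' where h: "length Ts' = r" "length ls' = r" "sum_list ls' = n - m"
      "\<forall>j<r. Ts' ! j \<in> SVT (rect2 (ls' ! j)) (rho_k k)" by (auto simp: Tset_def)
    show "Ts \<in> Tset k (Suc r) n" unfolding Tset_def
    proof (intro CollectI conjI exI[of _ "m # ls'"])
      show "length Ts = Suc r" "length (m # ls') = Suc r" using h m by auto
      show "sum_list (m # ls') = n" using h m by simp
      show "\<forall>j<Suc r. Ts ! j \<in> SVT (rect2 ((m # ls') ! j)) (rho_k k)"
      proof (intro allI impI)
        fix j assume "j < Suc r"
        then show "Ts ! j \<in> SVT (rect2 ((m # ls') ! j)) (rho_k k)" using h m by (cases j) auto
      qed
    qed
  qed
qed

lemma Tset_finite: "k \<ge> 1 \<Longrightarrow> finite (Tset k r n)"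
proof (induction r arbitrary: n)
  case 0 then show ?case by (simp add: Tset0)
next
  case (Suc r) then show ?case unfolding TsetSuc using SVT_finite by auto
qed

lemma Tset_card_Suc: assumes k: "k \<ge> 1"
  shows "card (Tset k (Suc r) n) = (\<Sum>m\<le>n. card (bw k 0 m) * card (Tset k r (n - m)))"
proof -
  let ?f = "\<lambda>(T, Ts). T # (Ts :: (nat \<times> nat \<Rightarrow> nat set) list)"
  have inj: "inj_on ?f X" for X by (auto simp: inj_on_def)
  have "card (Tset k (Suc r) n) = (\<Sum>m\<le>n. card (?f ` (SVT (rect2 m) (rho_k k) \<times> Tset k r (n - m))))"
    unfolding TsetSuc
  proof (rule card_UN_disjoint)
    show "finite {..n}" by simp
    show "\<forall>m\<in>{..n}. finite (?f ` (SVT (rect2 m) (rho_k k) \<times> Tset k r (n - m)))"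
      using SVT_finite[OF k] Tset_finite[OF k] by auto
    show "\<forall>m\<in>{..n}. \<forall>m'\<in>{..n}. m \<noteq> m' \<longrightarrow> ?f ` (SVT (rect2 m) (rho_k k) \<times> Tset k r (n - m)) \<inter> ?f ` (SVT (rect2 m') (rho_k k) \<times> Tset k r (n - m')) = {}"
      using SVT_eq_i[OF k] by fastforce
  qed
  also have "\<dots> = (\<Sum>m\<le>n. card (bw k 0 m) * card (Tset k r (n - m)))"
    by (rule sum.cong) (simp_all add: card_image[OF inj] card_cartesian_product SVT_card_bw[OF k])
  finally show ?thesis .
qed

lemma Tset_card: assumes k: "k \<ge> 1"
  shows "card (Tset k (Suc r) n) = card (bw k r n)"
proof (induction r arbitrary: n)
  case 0
  have "card (Tset k (Suc 0) n) = (\<Sum>m\<le>n. card (bw k 0 m) * card (Tset k 0 (n - m)))"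
    by (rule Tset_card_Suc[OF k])
  also have "\<dots> = (\<Sum>m\<le>n. if m = n then card (bw k 0 m) else 0)"
    by (rule sum.cong) (auto simp: Tset0)
  also have "\<dots> = card (bw k 0 n)" by simp
  finally show ?case .
next
  case (Suc r)
  have "card (Tset k (Suc (Suc r)) n) = (\<Sum>m\<le>n. card (bw k 0 m) * card (Tset k (Suc r) (n - m)))"
    by (rule Tset_card_Suc[OF k])
  also have "\<dots> = (\<Sum>m\<le>n. card (bw k 0 m) * card (bw k r (n - m)))" using Suc by simp
  also have "\<dots> = card (bw k (Suc r) n)" by (rule bw_conv[OF k, symmetric])
  finally show ?case .
qed

theorem proposition2:
  fixes k r n :: nat
  assumes "k \<ge> 1" and "r \<ge> 1"
  shows "real (card {Ts :: (nat \<times> nat \<Rightarrow> nat set) list. length Ts = r \<and>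
            (\<exists>is :: nat list. length is = r \<and> sum_list is = n \<and>
               (\<forall>j<r. Ts ! j \<in> SVT (rect2 (is ! j)) (rho_k k)))})
         = real r / real (k * n + r) * real ((k * n + r) choose n)"
proof -
  obtain r' where r: "r = Suc r'" using assms(2) by (cases r) auto
  have "card {Ts :: (nat \<times> nat \<Rightarrow> nat set) list. length Ts = r \<and>
            (\<exists>is :: nat list. length is = r \<and> sum_list is = n \<and>
               (\<forall>j<r. Ts ! j \<in> SVT (rect2 (is ! j)) (rho_k k)))} = card (Tset k r n)"
    by (simp add: Tset_def)
  also have "\<dots> = card (bw k r' n)" unfolding r by (rule Tset_card[OF assms(1)])
  finally have c: "int (card {Ts :: (nat \<times> nat \<Rightarrow> nat set) list. length Ts = r \<and>
            (\<exists>is :: nat list. length is = r \<and> sum_list is = n \<and>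
               (\<forall>j<r. Ts ! j \<in> SVT (rect2 (is ! j)) (rho_k k)))}) = G k r n"
    using B_eq_G[OF assms(1), of r' n] r by simp
  have "real (card {Ts :: (nat \<times> nat \<Rightarrow> nat set) list. length Ts = r \<and>
            (\<exists>is :: nat list. length is = r \<and> sum_list is = n \<and>
               (\<forall>j<r. Ts ! j \<in> SVT (rect2 (is ! j)) (rho_k k)))}) = of_int (G k r n)"
    using arg_cong[OF c, of "of_int :: int \<Rightarrow> real"] by simp
  also have "\<dots> = real r / real (k * n + r) * real ((k * n + r) choose n)"
    by (rule G_closed[OF assms(2) assms(1), symmetric])
  finally show ?thesis .
qed


end
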